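(* Assume (F), fix $\alpha\in\,]0,1[$, and let $0\le u^-<u^+\le V$ with $\hat\rho_{u^+}\le\check\rho_{u^-}$. Then $$u^+-u^-\ \ge\ \frac{\beta}{2}\,\big(\hat\rho_{u^-}-\check\rho_{u^-}\big).$$
   Context: Hypothesis (F): $R>0$; $f\in C^2([0,R];[0,+\infty))$ with $f(\rho)=\rho v(\rho)$, $v\in C^2([0,R];[0,+\infty))$; $f(0)=f(R)=0$; there are $B\ge\beta>0$ with $-B\le f''\le-\beta$ on $[0,R]$; $v'(\rho)<0$ for $\rho\in\,]0,R[$. Let $V:=\max_{[0,R]}v=v(0)$. Define $f_\alpha(\rho):=\alpha f(\rho/\alpha)$ for $\rho\in[0,\alpha R]$. For $u\in[0,V]$: $\tilde\rho_u$ is the unique solution of $f_\alpha'(\rho)=u$; $\varphi_u(\rho):=f_\alpha(\tilde\rho_u)+u(\rho-\tilde\rho_u)$ for $\rho\in[0,R]$; $\mathcal I_u:=\{\rho\in[0,R]: f(\rho)=\varphi_u(\rho)\}$, $\check\rho_u:=\min\mathcal I_u$, $\hat\rho_u:=\max\mathcal I_u$. *)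

theory Defs
  imports "HOL-Analysis.Analysis"
begin

definition f_alpha :: "(real \<Rightarrow> real) \<Rightarrow> real \<Rightarrow> real \<Rightarrow> real" where
  "f_alpha f \<alpha> \<rho> = \<alpha> * f (\<rho> / \<alpha>)"

definition rho_tilde :: "(real \<Rightarrow> real) \<Rightarrow> real \<Rightarrow> real \<Rightarrow> real \<Rightarrow> real" where
  "rho_tilde f R \<alpha> u = (THE \<rho>. \<rho> \<in> {0..\<alpha>*R} \<and>
      (f_alpha f \<alpha> has_real_derivative u) (at \<rho> within {0..\<alpha>*R}))"

definition phi_u :: "(real \<Rightarrow> real) \<Rightarrow> real \<Rightarrow> real \<Rightarrow> real \<Rightarrow> real \<Rightarrow> real" where
  "phi_u f R \<alpha> u \<rho> = f_alpha f \<alpha> (rho_tilde f R \<alpha> u) + u * (\<rho> - rho_tilde f R \<alpha> u)"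

definition I_u :: "(real \<Rightarrow> real) \<Rightarrow> real \<Rightarrow> real \<Rightarrow> real \<Rightarrow> real set" where
  "I_u f R \<alpha> u = {\<rho> \<in> {0..R}. f \<rho> = phi_u f R \<alpha> u \<rho>}"

text \<open>min and max of the (compact, nonempty) set I_u\<close>
definition rho_check :: "(real \<Rightarrow> real) \<Rightarrow> real \<Rightarrow> real \<Rightarrow> real \<Rightarrow> real" where
  "rho_check f R \<alpha> u = Inf (I_u f R \<alpha> u)"

definition rho_hat :: "(real \<Rightarrow> real) \<Rightarrow> real \<Rightarrow> real \<Rightarrow> real \<Rightarrow> real" where
  "rho_hat f R \<alpha> u = Sup (I_u f R \<alpha> u)"

end

theory Submission
  imports Defs
begin

lemma nb: assumes "0 < (c::real)" "x \<in> {0..c}" shows "at x within {0..c} \<noteq> bot"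
proof -
  consider "x = 0" | "x = c" | "0 < x" "x < c" using assms by force
  then show ?thesis
  proof cases
    case 1 then show ?thesis using assms by (simp add: at_within_Icc_at_right)
  next
    case 2 then show ?thesis using assms by (simp add: at_within_Icc_at_left)
  next
    case 3 then show ?thesis by (simp add: at_within_Icc_at)
  qed
qed

lemma dec_lemma:
  fixes g g' :: "real \<Rightarrow> real" and l r a b :: real
  assumes d: "\<And>x. x \<in> {l..r} \<Longrightarrow> (g has_real_derivative g' x) (at x within {l..r})"
    and n: "\<And>x. l < x \<Longrightarrow> x < r \<Longrightarrow> g' x \<le> 0" and ab: "l \<le> a" "a \<le> b" "b \<le> r"
  shows "g b \<le> g a"
proof -
  have c: "continuous_on {l..r} g" by (rule DERIV_continuous_on[OF d])
  show ?thesis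
  proof (rule DERIV_nonpos_imp_decreasing_open[OF ab(2)])
    fix x assume x: "a < x" "x < b"
    hence "DERIV g x :> g' x" using d[of x] ab by (simp add: at_within_Icc_at)
    thus "\<exists>y. DERIV g x :> y \<and> y \<le> 0" using n[of x] x ab by force
  next
    show "continuous_on {a..b} g" by (rule continuous_on_subset[OF c]) (use ab in auto)
  qed
qed

theorem mainTheorem3:
  fixes f f' f'' v v' v'' :: "real \<Rightarrow> real" and R B \<beta> \<alpha> um up :: real
  assumes R: "R > 0"
    and f_d1: "\<And>x. x \<in> {0..R} \<Longrightarrow> (f has_real_derivative f' x) (at x within {0..R})"
    and f_d2: "\<And>x. x \<in> {0..R} \<Longrightarrow> (f' has_real_derivative f'' x) (at x within {0..R})"
    and f_c2: "continuous_on {0..R} f''"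
    and f_nonneg: "\<And>x. x \<in> {0..R} \<Longrightarrow> f x \<ge> 0"
    and v_d1: "\<And>x. x \<in> {0..R} \<Longrightarrow> (v has_real_derivative v' x) (at x within {0..R})"
    and v_d2: "\<And>x. x \<in> {0..R} \<Longrightarrow> (v' has_real_derivative v'' x) (at x within {0..R})"
    and v_c2: "continuous_on {0..R} v''"
    and v_nonneg: "\<And>x. x \<in> {0..R} \<Longrightarrow> v x \<ge> 0"
    and fv: "\<And>\<rho>. \<rho> \<in> {0..R} \<Longrightarrow> f \<rho> = \<rho> * v \<rho>"
    and f0: "f 0 = 0" and fR: "f R = 0"
    and \<beta>: "\<beta> > 0" and B: "B \<ge> \<beta>"
    and f''_bounds: "\<And>x. x \<in> {0..R} \<Longrightarrow> - B \<le> f'' x \<and> f'' x \<le> - \<beta>"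
    and v'_neg: "\<And>\<rho>. 0 < \<rho> \<Longrightarrow> \<rho> < R \<Longrightarrow> v' \<rho> < 0"
    and \<alpha>: "0 < \<alpha>" "\<alpha> < 1"
    and u: "0 \<le> um" "um < up" "up \<le> Sup (v ` {0..R})"
    and order: "rho_hat f R \<alpha> up \<le> rho_check f R \<alpha> um"
  shows "up - um \<ge> \<beta> / 2 * (rho_hat f R \<alpha> um - rho_check f R \<alpha> um)"
proof -
  have cR: "continuous_on {0..R} f" by (rule DERIV_continuous_on[OF f_d1])
  have cR': "continuous_on {0..R} f'" by (rule DERIV_continuous_on[OF f_d2])
  have F1: "f' y + \<beta>*y \<le> f' x + \<beta>*x" if "0 \<le> x" "x \<le> y" "y \<le> R" for x y
  proof (rule dec_lemma[of 0 R "\<lambda>t. f' t + \<beta>*t" "\<lambda>t. f'' t + \<beta>"])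
    fix t :: real assume t: "t \<in> {0..R}"
    show "((\<lambda>t. f' t + \<beta>*t) has_real_derivative f'' t + \<beta>) (at t within {0..R})"
      using DERIV_add[OF f_d2[OF t] DERIV_cmult[OF DERIV_ident, of \<beta>]] by simp
  next
    fix t :: real assume "0 < t" "t < R"
    then show "f'' t + \<beta> \<le> 0" using f''_bounds[of t] by auto
  qed (use that in auto)
  have F2: "f y \<le> f x + f' x*(y-x) - \<beta>/2*(y-x)^2" if x: "x \<in> {0..R}" and y: "y \<in> {0..R}" for x y
  proof -
    define g where "g t = f t - f' x * t + \<beta>/2*(t-x)^2" for t
    have gd: "(g has_real_derivative f' t - f' x + \<beta>*(t-x)) (at t within {0..R})" if "t \<in> {0..R}" for t
      unfolding g_def[abs_def] using that
      by (auto intro!: derivative_eq_intros f_d1)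
    have "g y \<le> g x"
    proof (cases "x \<le> y")
      case True
      show ?thesis
      proof (rule dec_lemma[of x R g "\<lambda>t. f' t - f' x + \<beta>*(t-x)"])
        fix t assume "t \<in> {x..R}"
        then show "(g has_real_derivative f' t - f' x + \<beta>*(t-x)) (at t within {x..R})"
          using x by (intro DERIV_subset[OF gd]) auto
      next
        fix t assume "x < t" "t < R"
        then show "f' t - f' x + \<beta>*(t-x) \<le> 0" using F1[of x t] x by (auto simp: algebra_simps)
      qed (use x y True in auto)
    next
      case False
      have "- g x \<le> - g y"
      proof (rule dec_lemma[of 0 x "\<lambda>t. - g t" "\<lambda>t. - (f' t - f' x + \<beta>*(t-x))"])
        fix t assume "t \<in> {0..x}"
        then show "((\<lambda>t. - g t) has_real_derivative - (f' t - f' x + \<beta>*(t-x))) (at t within {0..x})"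
          using x by (intro DERIV_minus DERIV_subset[OF gd]) auto
      next
        fix t assume "0 < t" "t < x"
        then show "- (f' t - f' x + \<beta>*(t-x)) \<le> 0" using F1[of t x] x by (auto simp: algebra_simps)
      qed (use x y False in auto)
      then show ?thesis by simp
    qed
    then show ?thesis unfolding g_def by (simp add: algebra_simps)
  qed
  have F3: "\<alpha> * f s + \<beta>/2*((1-\<alpha>)*(\<alpha> * s)^2 + \<alpha>*(s-\<alpha> * s)^2) \<le> f (\<alpha> * s)" if s: "s \<in> {0..R}" for s
  proof -
    have as: "\<alpha> * s \<in> {0..R}" using s \<alpha> mult_left_le_one_le[of s \<alpha>] by auto
    define p where "p = f' (\<alpha> * s)"
    have e1: "f 0 \<le> f (\<alpha> * s) + p*(0-\<alpha> * s) - \<beta>/2*(0-\<alpha> * s)^2" using F2[OF as, of 0] R p_def by auto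
    have e2: "f s \<le> f (\<alpha> * s) + p*(s-\<alpha> * s) - \<beta>/2*(s-\<alpha> * s)^2" using F2[OF as s] p_def by auto
    have e1': "(1-\<alpha>)*f 0 \<le> (1-\<alpha>)*(f (\<alpha> * s) + p*(0-\<alpha> * s) - \<beta>/2*(0-\<alpha> * s)^2)"
      using e1 \<alpha> by (intro mult_left_mono) auto
    have e2': "\<alpha>*f s \<le> \<alpha>*(f (\<alpha> * s) + p*(s-\<alpha> * s) - \<beta>/2*(s-\<alpha> * s)^2)"
      using e2 \<alpha> by (intro mult_left_mono) auto
    have eq: "(1-\<alpha>)*(f (\<alpha> * s) + p*(0-\<alpha> * s) - \<beta>/2*(0-\<alpha> * s)^2) + \<alpha>*(f (\<alpha> * s) + p*(s-\<alpha> * s) - \<beta>/2*(s-\<alpha> * s)^2)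
        = f (\<alpha> * s) - \<beta>/2*((1-\<alpha>)*(\<alpha> * s)^2 + \<alpha>*(s-\<alpha> * s)^2)"
      by (simp add: field_simps power2_eq_square)
    have "(1-\<alpha>)*f 0 = 0" using f0 by simp
    then show ?thesis using e1' e2' eq by linarith
  qed
  have fR': "f' R < 0"
  proof -
    have "f 0 \<le> f R + f' R*(0-R) - \<beta>/2*(0-R)^2" using F2[of R 0] R by auto
    hence "f' R * R \<le> - \<beta>/2*R^2" using f0 fR by (simp add: algebra_simps)
    moreover have "\<beta>/2*R^2 > 0" using \<beta> R by simp
    ultimately have "f' R * R < 0" by linarith
    thus ?thesis using R by (simp add: mult_less_0_iff)
  qed
  have f'0: "f' 0 = v 0"
  proof -
    have "((\<lambda>x. x * v x) has_real_derivative 1 * v 0 + v' 0 * 0) (at 0 within {0..R})"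
      using R by (intro DERIV_mult DERIV_ident v_d1) auto
    hence d0: "((\<lambda>x. x * v x) has_real_derivative v 0) (at 0 within {0..R})" by simp
    have "(f has_real_derivative v 0) (at 0 within {0..R})"
    proof (rule has_field_derivative_transform_within[OF d0, where d=1])
      fix x assume "x \<in> {0..R}"
      then show "x * v x = f x" using fv[of x] by simp
    qed (use R in auto)
    moreover have "0 \<in> {0..R}" using R by simp
    ultimately show ?thesis using has_field_derivative_unique[OF f_d1 _ nb[OF R]] by blast
  qed
  have up0: "up \<le> f' 0"
  proof -
    have "Sup (v ` {0..R}) \<le> f' 0"
    proof (rule cSup_least)
      show "v ` {0..R} \<noteq> {}" using R by auto
    next
      fix y assume "y \<in> v ` {0..R}"
      then obtain r where r: "r \<in> {0..R}" "y = v r" by auto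
      show "y \<le> f' 0"
      proof (cases "r = 0")
        case True then show ?thesis using r f'0 by simp
      next
        case False
        have "f r \<le> f 0 + f' 0*(r-0) - \<beta>/2*(r-0)^2" using F2[of 0 r] r R by auto
        moreover have "\<beta>/2*(r-0)^2 \<ge> 0" using \<beta> by simp
        ultimately have "r * v r \<le> r * f' 0" using fv[OF r(1)] f0 by (simp add: algebra_simps)
        then show ?thesis using r False by (simp add: mult_le_cancel_left_pos)
      qed
    qed
    thus ?thesis using u by linarith
  qed
  have fa_d: "(f_alpha f \<alpha> has_real_derivative f'(\<rho>/\<alpha>)) (at \<rho> within {0..\<alpha>*R})"
    if \<rho>: "\<rho> \<in> {0..\<alpha>*R}" for \<rho>
  proof -
    have img: "(\<lambda>\<rho>. \<rho>/\<alpha>) ` {0..\<alpha>*R} = {0..R}"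
    proof
      show "(\<lambda>\<rho>. \<rho>/\<alpha>) ` {0..\<alpha>*R} \<subseteq> {0..R}" using \<alpha> by (auto simp: field_simps)
      show "{0..R} \<subseteq> (\<lambda>\<rho>. \<rho>/\<alpha>) ` {0..\<alpha>*R}"
      proof
        fix x assume "x \<in> {0..R}"
        then show "x \<in> (\<lambda>\<rho>. \<rho>/\<alpha>) ` {0..\<alpha>*R}" using \<alpha>
          by (intro image_eqI[of _ _ "\<alpha>*x"]) (auto intro: mult_left_mono)
      qed
    qed
    have r: "\<rho>/\<alpha> \<in> {0..R}" using \<rho> \<alpha> by (auto simp: field_simps)
    have "(f \<circ> (\<lambda>\<rho>. \<rho>/\<alpha>) has_real_derivative f'(\<rho>/\<alpha>) * (1/\<alpha>)) (at \<rho> within {0..\<alpha>*R})"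
      apply (rule DERIV_image_chain)
      using f_d1[OF r] img apply simp
      using \<alpha> by (auto intro!: derivative_eq_intros)
    then have "((\<lambda>x. \<alpha> * (f \<circ> (\<lambda>\<rho>. \<rho>/\<alpha>)) x) has_real_derivative \<alpha> * (f'(\<rho>/\<alpha>) * (1/\<alpha>))) (at \<rho> within {0..\<alpha>*R})"
      by (rule DERIV_cmult)
    then show ?thesis using \<alpha> by (simp add: f_alpha_def[abs_def] o_def)
  qed
  have key: "\<exists>s. s \<in> {0..R} \<and> f' s = u \<and> rho_hat f R \<alpha> u \<in> {0..R} \<and> rho_check f R \<alpha> u \<in> {0..R}
     \<and> f (rho_hat f R \<alpha> u) = \<alpha> * f s + u * (rho_hat f R \<alpha> u - \<alpha> * s)
     \<and> f (rho_check f R \<alpha> u) = \<alpha> * f s + u * (rho_check f R \<alpha> u - \<alpha> * s)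
     \<and> \<alpha> * s \<le> rho_hat f R \<alpha> u \<and> rho_check f R \<alpha> u \<le> rho_hat f R \<alpha> u"
    if u0: "0 \<le> u" "u \<le> f' 0" for u
  proof -
    obtain s where s: "0 \<le> s" "s \<le> R" "f' s = u"
      using IVT2'[of f' R u 0] fR' u0 cR' R by auto
    have as: "\<alpha> * s \<le> s" using s \<alpha> by (simp add: mult_left_le_one_le)
    have rt: "rho_tilde f R \<alpha> u = \<alpha> * s" unfolding rho_tilde_def
    proof (rule the_equality)
      have "\<alpha> * s \<in> {0..\<alpha>*R}" using s \<alpha> by (auto intro: mult_left_mono)
      then show "\<alpha> * s \<in> {0..\<alpha>*R} \<and> (f_alpha f \<alpha> has_real_derivative u) (at (\<alpha> * s) within {0..\<alpha>*R})"
        using fa_d[of "\<alpha> * s"] \<alpha> s by simp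
    next
      fix \<rho> assume h: "\<rho> \<in> {0..\<alpha>*R} \<and> (f_alpha f \<alpha> has_real_derivative u) (at \<rho> within {0..\<alpha>*R})"
      have aR: "0 < \<alpha>*R" using \<alpha> R by simp
      have eq: "f'(\<rho>/\<alpha>) = u"
        using has_field_derivative_unique[OF fa_d[of \<rho>] conjunct2[OF h] nb[OF aR, of \<rho>]] h by auto
      have r: "\<rho>/\<alpha> \<in> {0..R}" using h \<alpha> by (auto simp: field_simps)
      have "\<rho>/\<alpha> = s"
      proof (rule ccontr)
        assume ne: "\<rho>/\<alpha> \<noteq> s"
        show False
        proof (cases "\<rho>/\<alpha> < s")
          case True
          then have "f' s + \<beta>* s \<le> f' (\<rho>/\<alpha>) + \<beta>*(\<rho>/\<alpha>)" using F1[of "\<rho>/\<alpha>" s] r s by auto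
          then show False using eq s(3) mult_strict_left_mono[OF True \<beta>] by linarith
        next
          case False
          then have "f' (\<rho>/\<alpha>) + \<beta>*(\<rho>/\<alpha>) \<le> f' s + \<beta>* s" using F1[of s "\<rho>/\<alpha>"] r s by auto
          moreover have "s < \<rho>/\<alpha>" using False ne by linarith
          ultimately show False using eq s(3) mult_strict_left_mono[of s "\<rho>/\<alpha>" \<beta>] \<beta> by linarith
        qed
      qed
      then show "\<rho> = \<alpha> * s" using \<alpha> by (auto simp: field_simps)
    qed
    define h where "h \<rho> = f \<rho> - (\<alpha> * f s + u * (\<rho> - \<alpha> * s))" for \<rho>
    have Ieq: "I_u f R \<alpha> u = {\<rho> \<in> {0..R}. h \<rho> = 0}"
      unfolding I_u_def phi_u_def rt f_alpha_def h_def using \<alpha> by auto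
    have ch: "continuous_on {0..R} h" unfolding h_def[abs_def] by (intro continuous_intros cR)
    have cl: "closed (I_u f R \<alpha> u)" unfolding Ieq
      by (rule continuous_closed_preimage_constant[OF ch]) simp
    have bd: "bdd_above (I_u f R \<alpha> u)" "bdd_below (I_u f R \<alpha> u)" unfolding Ieq
      by (auto intro!: bdd_aboveI[of _ R] bdd_belowI[of _ 0])
    have h1: "h (\<alpha> * s) \<ge> 0"
    proof -
      have "\<beta>/2*((1-\<alpha>)*(\<alpha> * s)^2 + \<alpha>*(s-\<alpha> * s)^2) \<ge> 0" using \<beta> \<alpha> by auto
      moreover have "s \<in> {0..R}" using s by simp
      ultimately show ?thesis using F3[of s] unfolding h_def by simp
    qed
    have h2: "h R \<le> 0"
    proof -
      have "\<alpha> * f s \<ge> 0" using f_nonneg[of s] s \<alpha> by simp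
      moreover have "u * (R - \<alpha> * s) \<ge> 0" using u0 as s by simp
      ultimately show ?thesis unfolding h_def using fR by linarith
    qed
    obtain d where d: "\<alpha> * s \<le> d" "d \<le> R" "h d = 0"
      using IVT2'[of h R 0 "\<alpha> * s"] h1 h2 as s continuous_on_subset[OF ch, of "{\<alpha> * s..R}"] \<alpha>
      by auto
    have "0 \<le> \<alpha> * s" using s \<alpha> by simp
    hence dI: "d \<in> I_u f R \<alpha> u" unfolding Ieq using d by auto
    have ne: "I_u f R \<alpha> u \<noteq> {}" using dI by auto
    have hatI: "rho_hat f R \<alpha> u \<in> I_u f R \<alpha> u" unfolding rho_hat_def
      by (rule closed_contains_Sup[OF ne bd(1) cl])
    have chkI: "rho_check f R \<alpha> u \<in> I_u f R \<alpha> u" unfolding rho_check_def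
      by (rule closed_contains_Inf[OF ne bd(2) cl])
    have "d \<le> rho_hat f R \<alpha> u" unfolding rho_hat_def by (rule cSup_upper[OF dI bd(1)])
    moreover have "rho_check f R \<alpha> u \<le> rho_hat f R \<alpha> u" unfolding rho_check_def
      by (rule cInf_lower[OF hatI bd(2)])
    ultimately show ?thesis using hatI chkI s d unfolding Ieq h_def by (intro exI[of _ s]) auto
  qed
  obtain sm where sm: "sm \<in> {0..R}" "f' sm = um" "rho_hat f R \<alpha> um \<in> {0..R}" "rho_check f R \<alpha> um \<in> {0..R}"
     "f (rho_hat f R \<alpha> um) = \<alpha> * f sm + um * (rho_hat f R \<alpha> um - \<alpha> * sm)"
     "f (rho_check f R \<alpha> um) = \<alpha> * f sm + um * (rho_check f R \<alpha> um - \<alpha> * sm)"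
     "rho_check f R \<alpha> um \<le> rho_hat f R \<alpha> um"
    using key[of um] u up0 by auto
  obtain sp where sp: "sp \<in> {0..R}" "f' sp = up" "rho_hat f R \<alpha> up \<in> {0..R}"
     "f (rho_hat f R \<alpha> up) = \<alpha> * f sp + up * (rho_hat f R \<alpha> up - \<alpha> * sp)"
     "\<alpha> * sp \<le> rho_hat f R \<alpha> up"
    using key[of up] u up0 by auto
  define a where "a = rho_check f R \<alpha> um"
  define b where "b = rho_hat f R \<alpha> um"
  define c where "c = rho_hat f R \<alpha> up"
  have a: "a \<in> {0..R}" and b: "b \<in> {0..R}" and c: "c \<in> {0..R}" and ab: "a \<le> b" and ca: "c \<le> a"
    using sm sp order a_def b_def c_def by auto
  have fab: "f b - f a = um * (b - a)" using sm a_def b_def by (simp add: algebra_simps)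
  have asp: "\<alpha> * sp \<in> {0..R}" using sp \<alpha> mult_left_le_one_le[of sp \<alpha>] by auto
  have fc: "f' c \<le> up"
  proof (cases "c = \<alpha> * sp")
    case True
    have "\<beta>/2*((1-\<alpha>)*(\<alpha> * sp)^2 + \<alpha>*(sp-\<alpha> * sp)^2) \<le> 0"
      using F3[OF sp(1)] sp(4) True c_def by simp
    hence "(1-\<alpha>)*(\<alpha> * sp)^2 + \<alpha>*(sp-\<alpha> * sp)^2 \<le> 0" using \<beta>
      by (simp add: mult_le_0_iff)
    moreover have "\<alpha>*(sp-\<alpha> * sp)^2 \<ge> 0" using \<alpha> by simp
    ultimately have "(1-\<alpha>)*(\<alpha> * sp)^2 \<le> 0" by linarith
    hence "(\<alpha> * sp)^2 \<le> 0" using \<alpha> by (simp add: mult_le_0_iff)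
    hence "\<alpha> * sp = 0" by simp
    hence "sp = 0" "c = 0" using \<alpha> True by auto
    then show ?thesis using sp by simp
  next
    case False
    hence gt: "c - \<alpha> * sp > 0" using sp c_def by simp
    have e1: "f (\<alpha> * sp) \<le> f c + f' c*(\<alpha> * sp - c) - \<beta>/2*(\<alpha> * sp-c)^2" using F2[OF c asp] .
    have e2: "\<alpha> * f sp \<le> f (\<alpha> * sp)"
    proof -
      have "\<beta>/2*((1-\<alpha>)*(\<alpha> * sp)^2 + \<alpha>*(sp-\<alpha> * sp)^2) \<ge> 0" using \<beta> \<alpha> by auto
      then show ?thesis using F3[OF sp(1)] by linarith
    qed
    have e3: "\<beta>/2*(\<alpha> * sp-c)^2 \<ge> 0" using \<beta> by simp
    have "f' c*(\<alpha> * sp - c) = - (f' c * (c - \<alpha> * sp))" by (simp add: algebra_simps)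
    hence "0 \<le> (up - f' c) * (c - \<alpha> * sp)"
      using e1 e2 e3 sp(4) c_def by (simp add: algebra_simps)
    then show ?thesis using gt by (simp add: zero_le_mult_iff)
  qed
  have "\<beta> * c \<le> \<beta> * a" using mult_left_mono[OF ca, of \<beta>] \<beta> by simp
  moreover have "f' a + \<beta> * a \<le> f' c + \<beta> * c" using F1[of c a] a c ca by auto
  ultimately have fac: "f' a \<le> f' c" by linarith
  have fab2: "f b \<le> f a + f' a*(b-a) - \<beta>/2*(b-a)^2" using F2[OF a b] .
  have "\<beta>/2*(b-a)^2 \<le> (f' a - um)*(b-a)" using fab fab2 by (simp add: algebra_simps)
  also have "\<dots> \<le> (up - um)*(b-a)" using fac fc ab by (intro mult_right_mono) auto
  finally have main: "\<beta>/2*(b-a)*(b-a) \<le> (up - um)*(b-a)" by (simp add: power2_eq_square mult.assoc)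
  show ?thesis
  proof (cases "a = b")
    case True then show ?thesis using u a_def b_def by simp
  next
    case False
    hence "b - a > 0" using ab by simp
    hence "\<beta>/2*(b-a) \<le> up - um" using main by (simp add: mult_le_cancel_right_pos)
    then show ?thesis using a_def b_def by simp
  qed
qed

end
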